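(* Let $A,B$ be nonempty persistence diagrams, $d_0=\min\{d_\infty(A,B),d_\infty(D_0,B)\}$, $\Theta(c)=d_\infty(cA,B)$, and let $b^{(m)}=(b^{(m)}_x,b^{(m)}_y)$ be a point of $\chi(B)$ with the largest $y$-coordinate among points of $\chi(B)$. Then: (i) if $0\le c\le \dfrac{b^{(m)}_y-d_0}{\mathrm{bd}(A)}$, then $\Theta(c)\ge d_0$; (ii) if $0\le c\le \min\Big\{\dfrac{b^{(m)}_y+b^{(m)}_x}{2\,\mathrm{bd}(A)},\ \dfrac{\mathrm{pers}(B)}{\mathrm{pers}(A)}\Big\}$, then $\Theta(c)=\mathrm{pers}(B)$.
   Context: A persistence diagram is a finite multiset of points $a=(a_x,a_y)$ with $0\le a_x<a_y<\infty$ together with the diagonal $\Delta$ of infinite multiplicity; nonempty means it has at least one such point. $D_0$ is the empty diagram. $d_\infty$ is the bottleneck distance (infimum over multi-bijections between $A\cup\Delta$ and $B\cup\Delta$ of the maximal $\ell^\infty$ distance; matching $a$ to $\Delta$ costs $\mathrm{pers}(a)$). $cA=\{(ca_x,ca_y)\}$ for $c>0$, $0A=D_0$. $\mathrm{pers}(a)=(a_y-a_x)/2$; $\mathrm{pers}(A)=\max_{a\in A}\mathrm{pers}(a)$; $\chi(A)$ is the multiset of points of $A$ with persistence equal to $\mathrm{pers}(A)$; $\mathrm{bd}(A)=\max_{a\in A}a_y$. *)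

theory Defs
  imports Complex_Main "HOL-Library.Multiset"
begin

type_synonym point = "real \<times> real"
type_synonym diagram = "point multiset"

text \<open>A persistence diagram: finite multiset of off-diagonal points (the diagonal
is implicit, with infinite multiplicity).\<close>
definition is_diagram :: "diagram \<Rightarrow> bool" where
  "is_diagram A \<longleftrightarrow> (\<forall>a\<in>#A. 0 \<le> fst a \<and> fst a < snd a)"

definition pers :: "point \<Rightarrow> real" where
  "pers a = (snd a - fst a) / 2"

definition linf :: "point \<Rightarrow> point \<Rightarrow> real" where
  "linf a b = max \<bar>fst a - fst b\<bar> \<bar>snd a - snd b\<bar>"

text \<open>A (multi-)bijection between A \<union> Delta and B \<union> Delta is described by the
multiset M of pairs of off-diagonal points matched to each other; all remaining
points of A and of B are matched to the diagonal (cost pers).\<close>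
definition is_matching :: "diagram \<Rightarrow> diagram \<Rightarrow> (point \<times> point) multiset \<Rightarrow> bool" where
  "is_matching A B M \<longleftrightarrow> image_mset fst M \<subseteq># A \<and> image_mset snd M \<subseteq># B"

definition match_cost :: "diagram \<Rightarrow> diagram \<Rightarrow> (point \<times> point) multiset \<Rightarrow> real" where
  "match_cost A B M = Max (insert 0
      ((\<lambda>(a,b). linf a b) ` set_mset M
       \<union> pers ` set_mset (A - image_mset fst M)
       \<union> pers ` set_mset (B - image_mset snd M)))"

definition bottleneck :: "diagram \<Rightarrow> diagram \<Rightarrow> real" where
  "bottleneck A B = Inf (match_cost A B ` {M. is_matching A B M})"

definition D0 :: diagram where "D0 = {#}"

definition scale :: "real \<Rightarrow> diagram \<Rightarrow> diagram" where
  "scale c A = (if c > 0 then image_mset (\<lambda>(x,y). (c*x, c*y)) A else D0)"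

definition persD :: "diagram \<Rightarrow> real" where
  "persD A = Max (pers ` set_mset A)"

definition chi :: "diagram \<Rightarrow> diagram" where
  "chi A = filter_mset (\<lambda>a. pers a = persD A) A"

definition bd :: "diagram \<Rightarrow> real" where
  "bd A = Max (snd ` set_mset A)"

end

theory Submission
  imports Defs
begin

lemma mc_ge:
  assumes "x \<in> (\<lambda>(a,b). linf a b) ` set_mset M
       \<union> pers ` set_mset (A - image_mset fst M)
       \<union> pers ` set_mset (B - image_mset snd M)"
  shows "x \<le> match_cost A B M"
  unfolding match_cost_def by (rule Max_ge) (use assms in auto)

lemma mc_nonneg: "0 \<le> match_cost A B M"
  unfolding match_cost_def by (rule Max_ge) auto

lemma bottleneck_ge:
  assumes "\<And>M. is_matching A B M \<Longrightarrow> d \<le> match_cost A B M"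
  shows "d \<le> bottleneck A B"
  unfolding bottleneck_def
proof (rule cInf_greatest)
  show "match_cost A B ` {M. is_matching A B M} \<noteq> {}"
    using is_matching_def[of A B "{#}"] by auto
qed (use assms in auto)

lemma bottleneck_le:
  assumes "is_matching A B M"
  shows "bottleneck A B \<le> match_cost A B M"
  unfolding bottleneck_def
proof (rule cInf_lower)
  show "bdd_below (match_cost A B ` {M. is_matching A B M})"
    by (rule bdd_belowI[of _ 0]) (auto simp: mc_nonneg)
qed (use assms in auto)

lemma key:
  assumes "is_matching A B M" "b \<in># B"
  shows "pers b \<le> match_cost A B M \<or> (\<exists>a. a \<in># A \<and> linf a b \<le> match_cost A B M)"
proof (cases "b \<in># B - image_mset snd M")
  case True
  then show ?thesis by (intro disjI1 mc_ge) auto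
next
  case False
  hence "count B b \<le> count (image_mset snd M) b" by (simp add: in_diff_count)
  moreover have "count B b > 0" using assms(2) by simp
  ultimately have "b \<in># image_mset snd M" by (metis count_inI less_le_trans not_gr0)
  then obtain p where p: "p \<in># M" "b = snd p" by auto
  have "fst p \<in># image_mset fst M" using p by auto
  hence "fst p \<in># A" using assms(1) unfolding is_matching_def by (meson mset_subset_eqD)
  moreover have "linf (fst p) b \<le> match_cost A B M"
    by (rule mc_ge) (use p in \<open>auto intro!: image_eqI[of _ _ p] split: prod.splits\<close>)
  ultimately show ?thesis by blast
qed

lemma scale_mem: "a \<in># scale c A \<Longrightarrow> c > 0 \<and> (\<exists>x\<in>#A. a = (c*fst x, c*snd x))"
  unfolding scale_def D0_def by (auto split: if_splits) force

lemma bd_ge: "x \<in># A \<Longrightarrow> snd x \<le> bd A"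
  unfolding bd_def by (rule Max_ge) auto

lemma persD_ge: "x \<in># A \<Longrightarrow> pers x \<le> persD A"
  unfolding persD_def by (rule Max_ge) auto

lemma mc_empty: "match_cost X B {#} = Max (insert 0 (pers ` set_mset X \<union> pers ` set_mset B))"
  unfolding match_cost_def by simp

theorem mainTheorem6:
  fixes A B :: diagram and bm :: point
  assumes "is_diagram A" and "is_diagram B" and "A \<noteq> {#}" and "B \<noteq> {#}"
    and "bm \<in># chi B" and "\<forall>b\<in>#chi B. snd b \<le> snd bm"
  defines "d0 \<equiv> min (bottleneck A B) (bottleneck D0 B)"
  shows "(\<forall>c. 0 \<le> c \<and> c \<le> (snd bm - d0) / bd A \<longrightarrow> bottleneck (scale c A) B \<ge> d0)
    \<and> (\<forall>c. 0 \<le> c \<and> c \<le> min ((snd bm + fst bm) / (2 * bd A)) (persD B / persD A)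
           \<longrightarrow> bottleneck (scale c A) B = persD B)"
proof -
  have bmB: "bm \<in># B" and pbm: "pers bm = persD B" using assms(5) unfolding chi_def by auto
  have bmpos: "pers bm > 0" using assms(2) bmB unfolding is_diagram_def pers_def by auto
  obtain a0 where a0: "a0 \<in># A" using assms(3) by blast
  have "0 < snd a0" "0 < pers a0" using assms(1) a0 unfolding is_diagram_def pers_def by force+
  hence bdpos: "bd A > 0" and ppos: "persD A > 0" using bd_ge[OF a0] persD_ge[OF a0] by auto
  have "d0 \<le> bottleneck D0 B" unfolding d0_def by simp
  also have "\<dots> \<le> match_cost D0 B {#}" by (rule bottleneck_le) (simp add: is_matching_def D0_def)
  also have "\<dots> \<le> persD B" unfolding mc_empty D0_def using persD_ge[of _ B] pbm bmpos by auto
  finally have d0le: "d0 \<le> persD B" .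
  have lower: "d \<le> bottleneck (scale c A) B"
    if c0: "0 \<le> c" and d1: "d \<le> persD B" and d2: "\<And>y. y \<le> c * bd A \<Longrightarrow> d \<le> snd bm - y" for c d
  proof (rule bottleneck_ge)
    fix M assume M: "is_matching (scale c A) B M"
    from key[OF M bmB] show "d \<le> match_cost (scale c A) B M"
    proof
      assume "pers bm \<le> match_cost (scale c A) B M" thus ?thesis using d1 pbm by simp
    next
      assume "\<exists>a. a \<in># scale c A \<and> linf a bm \<le> match_cost (scale c A) B M"
      then obtain a where a: "a \<in># scale c A" "linf a bm \<le> match_cost (scale c A) B M" by blast
      from scale_mem[OF a(1)] obtain x where x: "x \<in># A" "a = (c*fst x, c*snd x)" "c > 0" by blast
      have "c * snd x \<le> c * bd A" using bd_ge[OF x(1)] x(3) by (simp add: mult_left_mono)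
      hence "d \<le> snd bm - snd a" using d2 x(2) by simp
      also have "\<dots> \<le> linf a bm" unfolding linf_def by auto
      finally show ?thesis using a(2) by simp
    qed
  qed
  show ?thesis
  proof (intro conjI allI impI)
    fix c assume c: "0 \<le> c \<and> c \<le> (snd bm - d0) / bd A"
    hence "c * bd A \<le> snd bm - d0" using bdpos by (simp add: pos_le_divide_eq)
    thus "d0 \<le> bottleneck (scale c A) B" using c d0le by (intro lower) auto
  next
    fix c assume c: "0 \<le> c \<and> c \<le> min ((snd bm + fst bm) / (2 * bd A)) (persD B / persD A)"
    hence "c * (2 * bd A) \<le> snd bm + fst bm" using bdpos by (simp add: pos_le_divide_eq)
    hence c1: "c * bd A \<le> (snd bm + fst bm)/2" by simp
    have c2: "c * persD A \<le> persD B" using c ppos by (simp add: pos_le_divide_eq)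
    have "persD B \<le> bottleneck (scale c A) B"
    proof (rule lower)
      fix y assume "y \<le> c * bd A"
      thus "persD B \<le> snd bm - y" using c1 pbm unfolding pers_def by simp
    qed (use c in auto)
    moreover have "bottleneck (scale c A) B \<le> match_cost (scale c A) B {#}"
      by (rule bottleneck_le) (simp add: is_matching_def)
    moreover have "match_cost (scale c A) B {#} \<le> persD B"
    proof -
      have "pers a \<le> persD B" if a: "a \<in># scale c A" for a
      proof -
        from scale_mem[OF a] obtain x where x: "x \<in># A" "a = (c*fst x, c*snd x)" "c > 0" by blast
        have "pers a = c * pers x" using x(2) unfolding pers_def by (simp add: algebra_simps)
        also have "\<dots> \<le> c * persD A" using persD_ge[OF x(1)] x(3) by (simp add: mult_left_mono)
        finally show ?thesis using c2 by simp
      qed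
      thus ?thesis unfolding mc_empty using persD_ge[of _ B] pbm bmpos by auto
    qed
    ultimately show "bottleneck (scale c A) B = persD B" by simp
  qed
qed

end
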